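(* The complete local statistics of an integer matrix $M\in\mathrm{Mat}(2,\mathbb{Z})$ depends only on the three invariants $\det(M)$, $\mathrm{trace}(M)$ and $\mathrm{mgcd}(M)$. Two integer matrices with the same triple of these invariants thus have the same local statistics on all lattices $L_n$, $n\in\mathbb{N}$. In particular, they have the same fixed point counts, both locally (the numbers of points of $L_n$ fixed by $M^m$, for all $n,m$) and globally (the numbers of isolated fixed points of $M^m$ on $\mathbb{T}^2$, for all $m$).
   Context: For $M=\begin{pmatrix}a&b\\c&d\end{pmatrix}$, $\mathrm{mgcd}(M)=\gcd(b,c,d-a)\ge0$. $\mathbb{T}^2=\mathbb{R}^2/\mathbb{Z}^2$, with integer matrices acting by multiplication mod $1$, and $L_n=\{(\frac{k}{n},\frac{\ell}{n}):0\le k,\ell<n\}\subset\mathbb{T}^2$. Two integer matrices have the same local statistics on $L_n$ if the directed pseudo-graphs on $L_n$ they induce (vertices the points of $L_n$, a directed edge from $x$ to $Mx$) are isomorphic as graphs. *)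

theory Defs
  imports "HOL-Analysis.Analysis"
begin

(* Integer 2x2 matrices are elements of int^2^2; M$i$j is the (i,j) entry, i,j in {1,2}. *)

definition trace2 :: "int^2^2 \<Rightarrow> int" where
  "trace2 M = M$1$1 + M$2$2"

definition mgcd :: "int^2^2 \<Rightarrow> int" where
  "mgcd M = gcd (M$1$2) (gcd (M$2$1) (M$2$2 - M$1$1))"

primrec matpow :: "int^2^2 \<Rightarrow> nat \<Rightarrow> int^2^2" where
  "matpow M 0 = mat 1"
| "matpow M (Suc m) = M ** matpow M m"

(* Points of T^2 = R^2/Z^2 are represented by their unique representatives in [0,1)^2. *)
definition torus :: "(real \<times> real) set" where
  "torus = {(x, y). 0 \<le> x \<and> x < 1 \<and> 0 \<le> y \<and> y < 1}"

definition tproj :: "real \<times> real \<Rightarrow> real \<times> real" where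
  "tproj p = (frac (fst p), frac (snd p))"

definition tact :: "int^2^2 \<Rightarrow> real \<times> real \<Rightarrow> real \<times> real" where
  "tact M p = tproj (of_int (M$1$1) * fst p + of_int (M$1$2) * snd p,
                     of_int (M$2$1) * fst p + of_int (M$2$2) * snd p)"

definition lattice :: "nat \<Rightarrow> (real \<times> real) set" where
  "lattice n = {(real k / real n, real l / real n) | k l. k < n \<and> l < n}"

definition induced_edges :: "int^2^2 \<Rightarrow> nat \<Rightarrow> ((real \<times> real) \<times> (real \<times> real)) set" where
  "induced_edges M n = {(x, tact M x) | x. x \<in> lattice n}"

definition digraph_iso :: "'a set \<Rightarrow> ('a \<times> 'a) set \<Rightarrow> 'b set \<Rightarrow> ('b \<times> 'b) set \<Rightarrow> bool" where
  "digraph_iso V1 E1 V2 E2 \<longleftrightarrow>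
     (\<exists>f. bij_betw f V1 V2 \<and> (\<forall>x\<in>V1. \<forall>y\<in>V1. (x, y) \<in> E1 \<longleftrightarrow> (f x, f y) \<in> E2))"

definition same_local_statistics :: "int^2^2 \<Rightarrow> int^2^2 \<Rightarrow> nat \<Rightarrow> bool" where
  "same_local_statistics M N n \<longleftrightarrow>
     digraph_iso (lattice n) (induced_edges M n) (lattice n) (induced_edges N n)"

definition local_fix_count :: "int^2^2 \<Rightarrow> nat \<Rightarrow> nat" where
  "local_fix_count M n = card {x \<in> lattice n. tact M x = x}"

(* isolated fixed points of M on T^2 (topology of T^2 via the lift to R^2) *)
definition isolated_fixed_points :: "int^2^2 \<Rightarrow> (real \<times> real) set" where
  "isolated_fixed_points M =
     {x \<in> torus. tact M x = x \<and>
        (\<exists>e>0. \<forall>y. 0 < dist y x \<and> dist y x < e \<longrightarrow> tact M (tproj y) \<noteq> tproj y)}"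

definition global_fix_count :: "int^2^2 \<Rightarrow> nat" where
  "global_fix_count M = card (isolated_fixed_points M)"

end

theory Submission
  imports Defs "HOL-Computational_Algebra.Primes"
begin

lemma mat_eq2: "(A::int^2^2) = B \<longleftrightarrow> A$1$1 = B$1$1 \<and> A$1$2 = B$1$2 \<and> A$2$1 = B$2$1 \<and> A$2$2 = B$2$2"
  by (auto simp: vec_eq_iff forall_2)

lemma mult2:
  fixes A B :: "int^2^2"
  shows "(A**B)$1$1 = A$1$1*B$1$1 + A$1$2*B$2$1"
    "(A**B)$1$2 = A$1$1*B$1$2 + A$1$2*B$2$2"
    "(A**B)$2$1 = A$2$1*B$1$1 + A$2$2*B$2$1"
    "(A**B)$2$2 = A$2$1*B$1$2 + A$2$2*B$2$2"
  by (simp_all add: matrix_matrix_mult_def sum_2)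

definition mk2 :: "int \<Rightarrow> int \<Rightarrow> int \<Rightarrow> int \<Rightarrow> int^2^2" where
  "mk2 a b c d = (\<chi> i j. if i = 1 then (if j = 1 then a else b) else (if j = 1 then c else d))"

lemma mk2_simps[simp]: "mk2 a b c d $1$1 = a" "mk2 a b c d $1$2 = b" "mk2 a b c d $2$1 = c" "mk2 a b c d $2$2 = d"
  by (simp_all add: mk2_def)

lemma det_mk2: "det (mk2 a b c d) = a*d - b*c"
  by (simp add: det_2)

lemma mat1_simps: "(mat 1::int^2^2)$1$1 = 1" "(mat 1::int^2^2)$1$2 = 0" "(mat 1::int^2^2)$2$1 = 0" "(mat 1::int^2^2)$2$2 = 1"
  by (simp_all add: mat_def)

definition lin :: "int^2^2 \<Rightarrow> real \<times> real \<Rightarrow> real \<times> real" where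
  "lin A p = (of_int (A$1$1) * fst p + of_int (A$1$2) * snd p,
              of_int (A$2$1) * fst p + of_int (A$2$2) * snd p)"

lemma tact_lin: "tact A p = tproj (lin A p)"
  by (simp add: tact_def lin_def)

lemma frac_int_diff: "x - y \<in> \<int> \<Longrightarrow> frac x = frac y"
  using frac_add_int_right[of "x - y" y] by simp

lemma frac_eq_imp_int: "frac x = frac y \<Longrightarrow> x - y \<in> \<int>"
proof -
  assume "frac x = frac y"
  then have "x - y = of_int (floor x - floor y)" by (simp add: frac_def)
  then show ?thesis by simp
qed

lemma tproj_eq: "fst p - fst q \<in> \<int> \<Longrightarrow> snd p - snd q \<in> \<int> \<Longrightarrow> tproj p = tproj q"
  by (simp add: tproj_def frac_int_diff)

lemma tproj_torus: "p \<in> torus \<Longrightarrow> tproj p = p"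
  by (auto simp: tproj_def torus_def frac_eq)

lemma tproj_in_torus: "tproj p \<in> torus"
  by (auto simp: tproj_def torus_def frac_lt_1)

lemma tact_torus: "tact A p \<in> torus"
  by (simp add: tact_def tproj_in_torus)

lemma lin_tproj: "tproj (lin A (tproj p)) = tproj (lin A p)"
proof (rule tproj_eq)
  have e1: "fst (lin A (tproj p)) - fst (lin A p) = - (of_int (A$1$1 * floor (fst p) + A$1$2 * floor (snd p)))"
    by (simp add: lin_def tproj_def frac_def algebra_simps)
  have e2: "snd (lin A (tproj p)) - snd (lin A p) = - (of_int (A$2$1 * floor (fst p) + A$2$2 * floor (snd p)))"
    by (simp add: lin_def tproj_def frac_def algebra_simps)
  show "fst (lin A (tproj p)) - fst (lin A p) \<in> \<int>" unfolding e1 by simp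
  show "snd (lin A (tproj p)) - snd (lin A p) \<in> \<int>" unfolding e2 by simp
qed

lemma lin_comp: "lin A (lin B p) = lin (A ** B) p"
  by (simp add: lin_def mult2 algebra_simps)

lemma tact_comp: "tact A (tact B p) = tact (A ** B) p"
  by (simp add: tact_lin lin_tproj lin_comp)

lemma tact_mat1: "p \<in> torus \<Longrightarrow> tact (mat 1) p = p"
  by (simp add: tact_lin lin_def mat1_simps tproj_torus)

lemma tact_pow: "p \<in> torus \<Longrightarrow> tact (matpow M m) p = (tact M ^^ m) p"
proof (induction m)
  case 0 then show ?case by (simp add: tact_mat1)
next
  case (Suc m) then show ?case by (simp add: tact_comp[symmetric])
qed

lemma lattice_iff:
  assumes "n \<ge> 1"
  shows "p \<in> lattice n \<longleftrightarrow> p \<in> torus \<and> real n * fst p \<in> \<int> \<and> real n * snd p \<in> \<int>"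
proof
  assume "p \<in> lattice n"
  then obtain k l where p: "p = (real k / real n, real l / real n)" "k < n" "l < n"
    by (auto simp: lattice_def)
  have n0: "real n > 0" using assms by simp
  have "real k / real n < 1" "real l / real n < 1" using p n0 by (simp_all add: divide_less_eq)
  moreover have "real n * (real k / real n) \<in> \<int>" "real n * (real l / real n) \<in> \<int>"
    using n0 by simp_all
  moreover have "0 \<le> real k / real n" "0 \<le> real l / real n" by simp_all
  ultimately show "p \<in> torus \<and> real n * fst p \<in> \<int> \<and> real n * snd p \<in> \<int>"
    unfolding p(1) torus_def by simp
next
  assume h: "p \<in> torus \<and> real n * fst p \<in> \<int> \<and> real n * snd p \<in> \<int>"
  then obtain k l where kl: "real n * fst p = of_int k" "real n * snd p = of_int l"
    by (meson Ints_cases)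
  have n0: "real n > 0" using assms by simp
  have "0 \<le> fst p" "fst p < 1" "0 \<le> snd p" "snd p < 1" using h by (auto simp: torus_def)
  then have i: "0 \<le> real n * fst p" "real n * fst p < real n * 1" "0 \<le> real n * snd p" "real n * snd p < real n * 1"
    using n0 mult_strict_left_mono[of "fst p" 1 "real n"] mult_strict_left_mono[of "snd p" 1 "real n"] by auto
  then have "0 \<le> real_of_int k" "real_of_int k < real_of_int (int n)" "0 \<le> real_of_int l" "real_of_int l < real_of_int (int n)"
    using kl by simp_all
  then have k: "0 \<le> k" "k < int n" and l: "0 \<le> l" "l < int n" by linarith+
  have "fst p = real (nat k) / real n" "snd p = real (nat l) / real n"
    using kl k l n0 by (simp_all add: field_simps)
  moreover have "nat k < n" "nat l < n" using k l by auto
  ultimately have "\<exists>k l. p = (real k / real n, real l / real n) \<and> k < n \<and> l < n"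
    by (metis prod.collapse)
  then show "p \<in> lattice n"
    unfolding lattice_def by blast
qed

lemma tact_lattice:
  assumes "n \<ge> 1" "p \<in> lattice n"
  shows "tact A p \<in> lattice n"
proof -
  have h: "real n * fst p \<in> \<int>" "real n * snd p \<in> \<int>" using assms lattice_iff by auto
  have frac_int: "real n * frac z \<in> \<int>" if "real n * z \<in> \<int>" for z
  proof -
    have "real n * frac z = real n * z - of_int (int n * floor z)" by (simp add: frac_def algebra_simps)
    then show ?thesis using that by simp
  qed
  have a: "real n * fst (lin A p) \<in> \<int>"
  proof -
    have "real n * fst (lin A p) = of_int (A$1$1) * (real n * fst p) + of_int (A$1$2) * (real n * snd p)"
      by (simp add: lin_def algebra_simps)
    then show ?thesis using h by simp
  qed
  have b: "real n * snd (lin A p) \<in> \<int>"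
  proof -
    have "real n * snd (lin A p) = of_int (A$2$1) * (real n * fst p) + of_int (A$2$2) * (real n * snd p)"
      by (simp add: lin_def algebra_simps)
    then show ?thesis using h by simp
  qed
  have "tact A p = (frac (fst (lin A p)), frac (snd (lin A p)))" by (simp add: tact_lin tproj_def)
  then show ?thesis using assms(1) frac_int[OF a] frac_int[OF b] tact_torus[of A p]
    by (simp only: lattice_iff) simp
qed

lemma finite_lattice: "finite (lattice n)"
proof -
  have "lattice n \<subseteq> (\<lambda>(k,l). (real k / real n, real l / real n)) ` ({..<n} \<times> {..<n})"
    unfolding lattice_def by (auto simp: image_iff)
  then show ?thesis by (rule finite_subset) simp
qed

lemma lattice_torus: "n \<ge> 1 \<Longrightarrow> p \<in> lattice n \<Longrightarrow> p \<in> torus"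
  using lattice_iff by blast

lemma coprime_zero:
  assumes cp: "coprime d (int n)" and n: "n \<ge> 1"
    and h1: "of_int d * u = of_int a" and h2: "real n * u = of_int z" and h3: "\<bar>u\<bar> < 1"
  shows "u = 0"
proof -
  have "real_of_int (d * z) = real_of_int (int n * a)"
    using h1 h2 by (simp, metis mult.left_commute)
  then have "d * z = int n * a" by (simp only: of_int_eq_iff)
  then have "int n dvd d * z" by (metis dvd_triv_left)
  moreover have "coprime (int n) d" using cp by (simp add: coprime_commute)
  ultimately have "int n dvd z" using coprime_dvd_mult_right_iff by blast
  then obtain q where q: "z = int n * q" by blast
  have "real n * u = real n * of_int q" using h2 q by simp
  then have uq: "u = of_int q" using n by simp
  then have "\<bar>q\<bar> < 1" using h3 by linarith
  then have "q = 0" by simp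
  then show ?thesis using uq by simp
qed

lemma tact_inj:
  assumes n: "n \<ge> 1" and cp: "coprime (det P) (int n)"
  shows "inj_on (tact P) (lattice n)"
proof (rule inj_onI)
  fix x y assume x: "x \<in> lattice n" and y: "y \<in> lattice n" and e: "tact P x = tact P y"
  define u where "u = fst x - fst y"
  define w where "w = snd x - snd y"
  have "frac (fst (lin P x)) = frac (fst (lin P y))" using e by (simp add: tact_lin tproj_def)
  then have "fst (lin P x) - fst (lin P y) \<in> \<int>" by (rule frac_eq_imp_int)
  moreover have "fst (lin P x) - fst (lin P y) = of_int (P$1$1) * u + of_int (P$1$2) * w"
    by (simp add: lin_def u_def w_def algebra_simps)
  ultimately obtain i1 where i1: "of_int (P$1$1) * u + of_int (P$1$2) * w = of_int i1"
    by (metis Ints_cases)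
  have "frac (snd (lin P x)) = frac (snd (lin P y))" using e by (simp add: tact_lin tproj_def)
  then have "snd (lin P x) - snd (lin P y) \<in> \<int>" by (rule frac_eq_imp_int)
  moreover have "snd (lin P x) - snd (lin P y) = of_int (P$2$1) * u + of_int (P$2$2) * w"
    by (simp add: lin_def u_def w_def algebra_simps)
  ultimately obtain i2 where i2: "of_int (P$2$1) * u + of_int (P$2$2) * w = of_int i2"
    by (metis Ints_cases)
  have xl: "x \<in> torus" "real n * fst x \<in> \<int>" "real n * snd x \<in> \<int>" using x n lattice_iff by auto
  have yl: "y \<in> torus" "real n * fst y \<in> \<int>" "real n * snd y \<in> \<int>" using y n lattice_iff by auto
  have "real n * u \<in> \<int>" using xl yl by (simp add: u_def right_diff_distrib)
  then obtain z1 where z1: "real n * u = of_int z1" by (metis Ints_cases)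
  have "real n * w \<in> \<int>" using xl yl by (simp add: w_def right_diff_distrib)
  then obtain z2 where z2: "real n * w = of_int z2" by (metis Ints_cases)
  have d1: "of_int (det P) * u = of_int (P$2$2 * i1 - P$1$2 * i2)"
  proof -
    have "of_int (det P) * u = of_int (P$2$2) * (of_int (P$1$1) * u + of_int (P$1$2) * w) - of_int (P$1$2) * (of_int (P$2$1) * u + of_int (P$2$2) * w)"
      by (simp add: det_2 algebra_simps)
    then show ?thesis using i1 i2 by simp
  qed
  have d2: "of_int (det P) * w = of_int (P$1$1 * i2 - P$2$1 * i1)"
  proof -
    have "of_int (det P) * w = of_int (P$1$1) * (of_int (P$2$1) * u + of_int (P$2$2) * w) - of_int (P$2$1) * (of_int (P$1$1) * u + of_int (P$1$2) * w)"
      by (simp add: det_2 algebra_simps)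
    then show ?thesis using i1 i2 by simp
  qed
  have "\<bar>u\<bar> < 1" "\<bar>w\<bar> < 1" using xl yl by (auto simp: torus_def u_def w_def)
  then have "u = 0" "w = 0" using coprime_zero[OF cp n d1 z1] coprime_zero[OF cp n d2 z2] by auto
  then show "x = y" by (simp add: u_def w_def prod_eq_iff)
qed

lemma edges_iff: "(x, y) \<in> induced_edges K n \<longleftrightarrow> x \<in> lattice n \<and> y = tact K x"
  unfolding induced_edges_def by blast

lemma conj_commute: "M ** P = P ** K \<Longrightarrow> tact P (tact K x) = tact M (tact P x)"
  by (simp add: tact_comp)

lemma conj_bij:
  assumes n: "n \<ge> 1" and cp: "coprime (det P) (int n)"
  shows "bij_betw (tact P) (lattice n) (lattice n)"
proof -
  have i: "inj_on (tact P) (lattice n)" using tact_inj[OF n cp] .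
  have s: "tact P ` lattice n \<subseteq> lattice n" using tact_lattice[OF n] by blast
  have "tact P ` lattice n = lattice n" using endo_inj_surj[OF finite_lattice s i] .
  then show ?thesis using i by (simp add: bij_betw_def)
qed

lemma conj_iso:
  assumes n: "n \<ge> 1" and cp: "coprime (det P) (int n)" and c: "M ** P = P ** K"
  shows "digraph_iso (lattice n) (induced_edges K n) (lattice n) (induced_edges M n)"
  unfolding digraph_iso_def
proof (intro exI conjI ballI)
  show "bij_betw (tact P) (lattice n) (lattice n)" using conj_bij[OF n cp] .
  fix x y assume x: "x \<in> lattice n" and y: "y \<in> lattice n"
  have px: "tact P x \<in> lattice n" using tact_lattice[OF n x] .
  have kx: "tact K x \<in> lattice n" using tact_lattice[OF n x] .
  have "y = tact K x \<longleftrightarrow> tact P y = tact P (tact K x)"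
    using tact_inj[OF n cp] y kx by (auto dest: inj_onD)
  also have "\<dots> \<longleftrightarrow> tact P y = tact M (tact P x)" using conj_commute[OF c] by simp
  finally show "(x, y) \<in> induced_edges K n \<longleftrightarrow> (tact P x, tact P y) \<in> induced_edges M n"
    using x px by (simp add: edges_iff)
qed

lemma conj_fix:
  assumes n: "n \<ge> 1" and cp: "coprime (det P) (int n)" and c: "B ** P = P ** A"
  shows "local_fix_count A n = local_fix_count B n"
proof -
  let ?L = "lattice n"
  have bij: "bij_betw (tact P) ?L ?L" using conj_bij[OF n cp] .
  have inj: "inj_on (tact P) ?L" using tact_inj[OF n cp] .
  have img: "tact P ` {x \<in> ?L. tact A x = x} = {y \<in> ?L. tact B y = y}"
  proof
    show "tact P ` {x \<in> ?L. tact A x = x} \<subseteq> {y \<in> ?L. tact B y = y}"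
    proof
      fix y assume "y \<in> tact P ` {x \<in> ?L. tact A x = x}"
      then obtain x where x: "x \<in> ?L" "tact A x = x" "y = tact P x" by blast
      have "tact B y = tact P (tact A x)" using conj_commute[OF c, of x] x(3) by simp
      also have "\<dots> = y" using x by simp
      finally show "y \<in> {y \<in> ?L. tact B y = y}" using x tact_lattice[OF n x(1)] by simp
    qed
  next
    show "{y \<in> ?L. tact B y = y} \<subseteq> tact P ` {x \<in> ?L. tact A x = x}"
    proof
      fix y assume y: "y \<in> {y \<in> ?L. tact B y = y}"
      have "y \<in> tact P ` ?L" using y bij by (simp add: bij_betw_def)
      then obtain x where x: "x \<in> ?L" "y = tact P x" by blast
      have "tact P (tact A x) = tact P x" using conj_commute[OF c, of x] x y by simp
      then have "tact A x = x" using inj x tact_lattice[OF n x(1)] by (auto dest: inj_onD)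
      then show "y \<in> tact P ` {x \<in> ?L. tact A x = x}" using x by auto
    qed
  qed
  have "card (tact P ` {x \<in> ?L. tact A x = x}) = card {x \<in> ?L. tact A x = x}"
    by (rule card_image) (rule inj_on_subset[OF inj], auto)
  then show ?thesis unfolding local_fix_count_def using img by simp
qed

lemma conj_pow: "M ** P = P ** K \<Longrightarrow> matpow M m ** P = P ** matpow K m"
proof (induction m)
  case 0 then show ?case by (simp add: matrix_mul_lid matrix_mul_rid)
next
  case (Suc m)
  have "matpow M (Suc m) ** P = M ** (matpow M m ** P)" by (simp add: matrix_mul_assoc)
  also have "\<dots> = (M ** P) ** matpow K m" using Suc by (simp add: matrix_mul_assoc)
  also have "\<dots> = P ** matpow K (Suc m)" using Suc.prems by (simp add: matrix_mul_assoc)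
  finally show ?case .
qed

definition conjn :: "nat \<Rightarrow> int^2^2 \<Rightarrow> int^2^2 \<Rightarrow> bool" where
  "conjn n M K \<longleftrightarrow> (\<exists>P. coprime (det P) (int n) \<and> M ** P = P ** K)"

lemma conjn_trans: "conjn n M K \<Longrightarrow> conjn n K L \<Longrightarrow> conjn n M L"
proof -
  assume "conjn n M K" "conjn n K L"
  then obtain P Q where P: "coprime (det P) (int n)" "M ** P = P ** K"
    and Q: "coprime (det Q) (int n)" "K ** Q = Q ** L" by (auto simp: conjn_def)
  have "M ** (P ** Q) = (P ** Q) ** L"
    by (metis P(2) Q(2) matrix_mul_assoc)
  moreover have "coprime (det (P ** Q)) (int n)" using P Q by (simp add: det_mul)
  ultimately show ?thesis by (auto simp: conjn_def)
qed

lemma digraph_iso_sym: "digraph_iso V1 E1 V2 E2 \<Longrightarrow> digraph_iso V2 E2 V1 E1"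
proof -
  assume "digraph_iso V1 E1 V2 E2"
  then obtain f where f: "bij_betw f V1 V2" "\<forall>x\<in>V1. \<forall>y\<in>V1. (x, y) \<in> E1 \<longleftrightarrow> (f x, f y) \<in> E2"
    by (auto simp: digraph_iso_def)
  let ?g = "inv_into V1 f"
  have g: "bij_betw ?g V2 V1" using f(1) by (rule bij_betw_inv_into)
  have "\<forall>x\<in>V2. \<forall>y\<in>V2. (x, y) \<in> E2 \<longleftrightarrow> (?g x, ?g y) \<in> E1"
  proof (intro ballI)
    fix x y assume x: "x \<in> V2" and y: "y \<in> V2"
    have gx: "?g x \<in> V1" "f (?g x) = x" using g x f(1) by (auto simp: bij_betw_def f_inv_into_f inv_into_into)
    have gy: "?g y \<in> V1" "f (?g y) = y" using g y f(1) by (auto simp: bij_betw_def f_inv_into_f inv_into_into)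
    show "(x, y) \<in> E2 \<longleftrightarrow> (?g x, ?g y) \<in> E1" using f(2) gx gy by metis
  qed
  then show ?thesis using g by (auto simp: digraph_iso_def)
qed

lemma digraph_iso_trans: "digraph_iso V1 E1 V2 E2 \<Longrightarrow> digraph_iso V2 E2 V3 E3 \<Longrightarrow> digraph_iso V1 E1 V3 E3"
proof -
  assume "digraph_iso V1 E1 V2 E2" "digraph_iso V2 E2 V3 E3"
  then obtain f g where f: "bij_betw f V1 V2" "\<forall>x\<in>V1. \<forall>y\<in>V1. (x, y) \<in> E1 \<longleftrightarrow> (f x, f y) \<in> E2"
    and g: "bij_betw g V2 V3" "\<forall>x\<in>V2. \<forall>y\<in>V2. (x, y) \<in> E2 \<longleftrightarrow> (g x, g y) \<in> E3"
    by (auto simp: digraph_iso_def)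
  have "bij_betw (g \<circ> f) V1 V3" using f(1) g(1) by (rule bij_betw_trans)
  moreover have "\<forall>x\<in>V1. \<forall>y\<in>V1. (x, y) \<in> E1 \<longleftrightarrow> ((g \<circ> f) x, (g \<circ> f) y) \<in> E3"
    using f g by (auto simp: bij_betw_def)
  ultimately show ?thesis by (auto simp: digraph_iso_def)
qed

lemma coprime_by_primes:
  fixes f n :: int
  assumes n: "n \<noteq> 0" and h: "\<And>p. prime p \<Longrightarrow> p dvd n \<Longrightarrow> \<not> p dvd f"
  shows "coprime f n"
proof (rule ccontr)
  assume nc: "\<not> coprime f n"
  have "gcd f n \<noteq> 0" using n by simp
  moreover have "\<not> is_unit (gcd f n)"
  proof
    assume "is_unit (gcd f n)"
    then have "coprime f n" by (simp only: is_unit_gcd)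
    then show False using nc by simp
  qed
  ultimately obtain p where "p dvd gcd f n" "prime p" using prime_divisor_exists by blast
  then show False using h by auto
qed

lemma prim_form_rep:
  fixes A B C n :: int
  assumes g: "gcd A (gcd B C) = 1" and n: "n \<noteq> 0"
  shows "\<exists>x y. coprime (A*x*x + B*x*y + C*y*y) n"
proof -
  define PS where "PS = {p::int. prime p \<and> p dvd n}"
  have fin: "finite PS" unfolding PS_def
    by (rule finite_subset[of _ "{p. p dvd n}"]) (auto simp: n)
  define P1 where "P1 = {p\<in>PS. \<not> p dvd A}"
  define P2 where "P2 = {p\<in>PS. p dvd A \<and> \<not> p dvd C}"
  have "P1 \<subseteq> PS" "P2 \<subseteq> PS" unfolding P1_def P2_def by blast+
  then have f1: "finite P1" "finite P2" using fin finite_subset by blast+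
  define x where "x = \<Prod>P2"
  define y where "y = \<Prod>P1"
  have dx: "p dvd x \<longleftrightarrow> p \<in> P2" if pp: "prime p" for p
  proof
    assume "p dvd x"
    then have "p dvd prod (\<lambda>x. x) P2" by (simp add: x_def)
    then obtain q where q: "q \<in> P2" "p dvd q" using prime_dvd_prod_iff[OF f1(2) pp, where f="\<lambda>x. x"] by blast
    then have "prime q" unfolding P2_def PS_def by blast
    then have "p = q" using primes_dvd_imp_eq[OF pp _ q(2)] by simp
    then show "p \<in> P2" using q(1) by simp
  next
    assume "p \<in> P2" then show "p dvd x" unfolding x_def using dvd_prodI[OF f1(2), of p "\<lambda>x. x"] by simp
  qed
  have dy: "p dvd y \<longleftrightarrow> p \<in> P1" if pp: "prime p" for p
  proof
    assume "p dvd y"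
    then have "p dvd prod (\<lambda>x. x) P1" by (simp add: y_def)
    then obtain q where q: "q \<in> P1" "p dvd q" using prime_dvd_prod_iff[OF f1(1) pp, where f="\<lambda>x. x"] by blast
    then have "prime q" unfolding P1_def PS_def by blast
    then have "p = q" using primes_dvd_imp_eq[OF pp _ q(2)] by simp
    then show "p \<in> P1" using q(1) by simp
  next
    assume "p \<in> P1" then show "p dvd y" unfolding y_def using dvd_prodI[OF f1(1), of p "\<lambda>x. x"] by simp
  qed
  have "coprime (A*x*x + B*x*y + C*y*y) n"
  proof (rule coprime_by_primes[OF n])
    fix p :: int assume p: "prime p" "p dvd n"
    then have pPS: "p \<in> PS" by (simp add: PS_def)
    show "\<not> p dvd (A*x*x + B*x*y + C*y*y)"
    proof (cases "p dvd A")
      case False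
      then have "p \<in> P1" "p \<notin> P2" using pPS unfolding P1_def P2_def by simp_all
      then have py: "p dvd y" and px: "\<not> p dvd x" using dx[OF p(1)] dy[OF p(1)] by blast+
      have e: "A*x*x + B*x*y + C*y*y = A*x*x + y*(B*x + C*y)" by (simp add: algebra_simps)
      have X: "\<not> p dvd A*x*x" using False px by (simp add: prime_dvd_mult_iff[OF p(1)])
      have Y: "p dvd y*(B*x + C*y)" using py by simp
      show ?thesis unfolding e using X dvd_add_left_iff[OF Y, of "A*x*x"] by blast
    next
      case pA: True
      show ?thesis
      proof (cases "p dvd C")
        case False
        then have "p \<in> P2" "p \<notin> P1" using pPS pA unfolding P1_def P2_def by simp_all
        then have px: "p dvd x" and py: "\<not> p dvd y" using dx[OF p(1)] dy[OF p(1)] by blast+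
        have e: "A*x*x + B*x*y + C*y*y = C*y*y + x*(A*x + B*y)" by (simp add: algebra_simps)
        have X: "\<not> p dvd C*y*y" using False py by (simp add: prime_dvd_mult_iff[OF p(1)])
        have Y: "p dvd x*(A*x + B*y)" using px by simp
        show ?thesis unfolding e using X dvd_add_left_iff[OF Y, of "C*y*y"] by blast
      next
        case pC: True
        then have "p \<notin> P2" "p \<notin> P1" using pA unfolding P1_def P2_def by simp_all
        then have px: "\<not> p dvd x" and py: "\<not> p dvd y" using dx[OF p(1)] dy[OF p(1)] by blast+
        have pB: "\<not> p dvd B"
        proof
          assume "p dvd B"
          then have "p dvd gcd A (gcd B C)" using pA pC by (simp add: gcd_greatest)
          then have "p dvd 1" using g by simp
          then show False using p(1) not_prime_unit by blast
        qed
        have e: "A*x*x + B*x*y + C*y*y = B*x*y + (A*(x*x) + C*(y*y))" by (simp add: algebra_simps)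
        have Y: "p dvd A*(x*x) + C*(y*y)" using pA pC by simp
        have X: "\<not> p dvd B*x*y" using pB px py by (simp add: prime_dvd_mult_iff[OF p(1)])
        show ?thesis unfolding e using X dvd_add_left_iff[OF Y, of "B*x*y"] by blast
      qed
    qed
  qed
  then show ?thesis by blast
qed

lemma shift_conj:
  fixes a e g d a' e' d' u :: int
  assumes g: "g \<noteq> 0" and h1: "a' = a + u*g" and h2: "a + d = a' + d'" and h3: "a*d - e*g = a'*d' - e'*g"
  shows "mk2 a' e' g d' ** mk2 1 u 0 1 = mk2 1 u 0 1 ** mk2 a e g d"
proof -
  have d': "d' = d - u*g" using h1 h2 by simp
  have "g * (a'*u + e') = g * (e + u*d)"
    using h1 h3 d' by algebra
  then have e12: "a'*u + e' = e + u*d" using g by simp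
  show ?thesis using e12 h1 d' by (simp add: mat_eq2 mult2 algebra_simps)
qed

lemma shift_exists:
  fixes a d a' d' e e' g :: int
  assumes g: "g > 0" and "g dvd (d - a)" "g dvd (d' - a')" "g dvd e" "g dvd e'"
    and tr: "a + d = a' + d'" and dt: "a*d - e*g = a'*d' - e'*g"
  shows "g dvd (a' - a)"
proof -
  obtain s where s: "d - a = g * s" using assms(2) by blast
  obtain s' where s': "d' - a' = g * s'" using assms(3) by blast
  obtain f where f: "e = g * f" using assms(4) by blast
  obtain f' where f': "e' = g * f'" using assms(5) by blast
  define k where "k = s' - s"
  have lin: "2*a - 2*a' = g * k" using s s' tr unfolding k_def by (simp add: algebra_simps)
  have dd: "d = a + g * s" "d' = a' + g * s'" using s s' by simp_all
  have dt2: "a*(a+g * s) - g * f*g = a'*(a'+g * s') - g * f'*g" using dt dd f f' by (simp add: algebra_simps)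
  have "g * g * (4*(f'-f)) = g * g * (k * k - 2 * k * s')"
    using lin dt2 k_def by algebra
  then have "4*(f'-f) = k * k - 2 * k * s'" using g by simp
  then have "k * k = 2*(2*(f'-f) + k * s')" by simp
  then have "even (k * k)" by simp
  then have "even k" by simp
  then obtain j where j: "k = 2 * j" by blast
  then have "a - a' = g * j" using lin by simp
  then have "a' - a = g*(-j)" by simp
  then show ?thesis by (rule dvdI)
qed

lemma gcd_prim:
  fixes g b c e :: int
  assumes "g \<noteq> 0" "gcd (g*b) (gcd (g*c) (g*e)) = g"
  shows "gcd c (gcd e (-b)) = 1"
proof -
  have g0: "g \<ge> 0" using assms(2) by (metis gcd_ge_0_int)
  have "gcd (g*c) (g*e) = g * gcd c e" using gcd_mult_distrib_int[of g c e] g0 by simp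
  moreover have "gcd (g*b) (g * gcd c e) = g * gcd b (gcd c e)"
    using gcd_mult_distrib_int[of g b "gcd c e"] g0 by simp
  ultimately have "g * gcd b (gcd c e) = g * 1" using assms(2) by simp
  then have "gcd b (gcd c e) = 1" using assms(1) by (simp only: mult_cancel_left) simp
  then show ?thesis by (simp add: ac_simps)
qed

lemma canon:
  assumes g0: "mgcd M \<noteq> 0" and n: "n \<ge> 1"
  shows "conjn n M (mk2 (M$1$1) (mgcd M * (M$1$2 div mgcd M) * (M$2$1 div mgcd M)) (mgcd M) (M$2$2))"
proof -
  define g where "g = mgcd M"
  have gd: "g dvd M$1$2" "g dvd M$2$1" "g dvd M$2$2 - M$1$1"
    unfolding g_def mgcd_def by (meson gcd_dvd1 gcd_dvd2 dvd_trans)+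
  obtain \<beta> where b: "M$1$2 = g*\<beta>" using gd(1) by blast
  obtain \<gamma> where c: "M$2$1 = g*\<gamma>" using gd(2) by blast
  obtain \<epsilon> where e: "M$2$2 - M$1$1 = g*\<epsilon>" using gd(3) by blast
  have g0': "g \<noteq> 0" using g0 g_def by simp
  have bd: "M$1$2 div g = \<beta>" "M$2$1 div g = \<gamma>" using b c g0' by simp_all
  have "gcd (M$1$2) (gcd (M$2$1) (M$2$2 - M$1$1)) = g" unfolding g_def mgcd_def by (rule refl)
  then have "gcd (g*\<beta>) (gcd (g*\<gamma>) (g*\<epsilon>)) = g" by (simp only: b c e)
  then have prim: "gcd \<gamma> (gcd \<epsilon> (-\<beta>)) = 1" using gcd_prim g0' by blast
  obtain x y where xy: "coprime (\<gamma>*x*x + \<epsilon>*x*y + (-\<beta>)*y*y) (int n)"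
    using prim_form_rep[OF prim, of "int n"] n by auto
  define P where "P = mk2 x (\<beta>*y) y (\<gamma>*x + \<epsilon>*y)"
  have "det P = \<gamma>*x*x + \<epsilon>*x*y + (-\<beta>)*y*y" unfolding P_def det_mk2 by (simp add: algebra_simps)
  then have cp: "coprime (det P) (int n)" using xy by simp
  have d: "M$2$2 = M$1$1 + g*\<epsilon>" using e by simp
  have "M ** P = P ** mk2 (M$1$1) (g * \<beta> * \<gamma>) g (M$2$2)"
    unfolding P_def mat_eq2 mult2 mk2_simps b c d by (simp add: algebra_simps)
  then have "conjn n M (mk2 (M$1$1) (g * \<beta> * \<gamma>) g (M$2$2))" using cp unfolding conjn_def by blast
  then show ?thesis unfolding g_def[symmetric] bd .
qed

lemma conjn_cons:
  assumes c: "conjn n M K" and n: "n \<ge> 1"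
  shows "digraph_iso (lattice n) (induced_edges K n) (lattice n) (induced_edges M n)"
    "local_fix_count (matpow K m) n = local_fix_count (matpow M m) n"
proof -
  obtain P where P: "coprime (det P) (int n)" "M ** P = P ** K" using c by (auto simp: conjn_def)
  show "digraph_iso (lattice n) (induced_edges K n) (lattice n) (induced_edges M n)"
    using conj_iso[OF n P(1) P(2)] .
  show "local_fix_count (matpow K m) n = local_fix_count (matpow M m) n"
    using conj_fix[OF n P(1) conj_pow[OF P(2)]] .
qed

lemma local_part:
  assumes dt: "det M = det N" and tr: "trace2 M = trace2 N" and mg: "mgcd M = mgcd N" and n: "n \<ge> 1"
  shows "same_local_statistics M N n \<and> (\<forall>m. local_fix_count (matpow M m) n = local_fix_count (matpow N m) n)"
proof (cases "mgcd M = 0")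
  case True
  then have m0: "M$1$2 = 0" "M$2$1 = 0" "M$2$2 - M$1$1 = 0" unfolding mgcd_def by simp_all
  have "mgcd N = 0" using True mg by simp
  then have n0: "N$1$2 = 0" "N$2$1 = 0" "N$2$2 - N$1$1 = 0" unfolding mgcd_def by simp_all
  have "M$1$1 + M$2$2 = N$1$1 + N$2$2" using tr by (simp add: trace2_def)
  then have "M = N" using m0 n0 unfolding mat_eq2 by simp
  moreover have "digraph_iso (lattice n) (induced_edges N n) (lattice n) (induced_edges N n)"
    unfolding digraph_iso_def by (rule exI[of _ id]) simp
  ultimately show ?thesis by (simp add: same_local_statistics_def)
next
  case False
  define g where "g = mgcd M"
  have g0: "g \<noteq> 0" using False g_def by simp
  have gpos: "g > 0" using g0 unfolding g_def mgcd_def by (metis gcd_ge_0_int order_le_less)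
  have gN: "mgcd N = g" using mg g_def by simp
  have gdM: "g dvd M$1$2" "g dvd M$2$1" "g dvd M$2$2 - M$1$1"
    unfolding g_def mgcd_def by (meson gcd_dvd1 gcd_dvd2 dvd_trans)+
  have gdN: "g dvd N$1$2" "g dvd N$2$1" "g dvd N$2$2 - N$1$1"
    unfolding gN[symmetric] mgcd_def by (meson gcd_dvd1 gcd_dvd2 dvd_trans)+
  define eM where "eM = g * (M$1$2 div g) * (M$2$1 div g)"
  define eN where "eN = g * (N$1$2 div g) * (N$2$1 div g)"
  define KM where "KM = mk2 (M$1$1) eM g (M$2$2)"
  define KN where "KN = mk2 (N$1$1) eN g (N$2$2)"
  have cM: "conjn n M KM" using canon[OF False n] unfolding KM_def eM_def g_def .
  have cN: "conjn n N KN" using canon[of N, OF _ n] gN g0 unfolding KN_def eN_def by simp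
  have eMg: "eM * g = M$1$2 * M$2$1"
  proof -
    have "eM * g = (g * (M$1$2 div g)) * ((M$2$1 div g) * g)" unfolding eM_def by (simp add: ac_simps)
    also have "\<dots> = M$1$2 * M$2$1" using gdM(1,2) by simp
    finally show ?thesis .
  qed
  have eNg: "eN * g = N$1$2 * N$2$1"
  proof -
    have "eN * g = (g * (N$1$2 div g)) * ((N$2$1 div g) * g)" unfolding eN_def by (simp add: ac_simps)
    also have "\<dots> = N$1$2 * N$2$1" using gdN(1,2) by simp
    finally show ?thesis .
  qed
  have dtK: "M$1$1 * M$2$2 - eM * g = N$1$1 * N$2$2 - eN * g"
    using dt unfolding eMg eNg by (simp add: det_2)
  have trK: "M$1$1 + M$2$2 = N$1$1 + N$2$2" using tr by (simp add: trace2_def)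
  have "g dvd eM" "g dvd eN" unfolding eM_def eN_def by simp_all
  then have "g dvd (N$1$1 - M$1$1)"
    using shift_exists[OF gpos gdM(3) gdN(3) _ _ trK dtK] by blast
  then obtain u where u: "N$1$1 - M$1$1 = g * u" by blast
  have "KN ** mk2 1 u 0 1 = mk2 1 u 0 1 ** KM"
    unfolding KN_def KM_def
    by (rule shift_conj[OF g0]) (use u trK dtK in \<open>simp_all add: algebra_simps\<close>)
  moreover have "coprime (det (mk2 1 u 0 1)) (int n)" by (simp add: det_mk2)
  ultimately have "conjn n KN KM" unfolding conjn_def by blast
  then have cNM: "conjn n N KM" using conjn_trans[OF cN] by blast
  have "digraph_iso (lattice n) (induced_edges M n) (lattice n) (induced_edges N n)"
    using digraph_iso_trans[OF digraph_iso_sym[OF conjn_cons(1)[OF cM n]] conjn_cons(1)[OF cNM n]] .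
  moreover have "\<forall>m. local_fix_count (matpow M m) n = local_fix_count (matpow N m) n"
    using conjn_cons(2)[OF cM n] conjn_cons(2)[OF cNM n] by metis
  ultimately show ?thesis by (simp add: same_local_statistics_def)
qed

fun abc :: "int \<Rightarrow> int \<Rightarrow> nat \<Rightarrow> int \<times> int" where
  "abc T D 0 = (1, 0)"
| "abc T D (Suc m) = (- D * snd (abc T D m), fst (abc T D m) + T * snd (abc T D m))"

lemma matpow_form:
  fixes M :: "int^2^2"
  defines "T \<equiv> trace2 M" and "D \<equiv> det M"
  shows "matpow M m $1$1 = fst (abc T D m) + snd (abc T D m) * M$1$1
    \<and> matpow M m $1$2 = snd (abc T D m) * M$1$2
    \<and> matpow M m $2$1 = snd (abc T D m) * M$2$1
    \<and> matpow M m $2$2 = fst (abc T D m) + snd (abc T D m) * M$2$2"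
proof (induction m)
  case 0 then show ?case by (simp add: mat1_simps)
next
  case (Suc m)
  obtain \<alpha> \<beta> where ab: "abc T D m = (\<alpha>, \<beta>)" by (cases "abc T D m")
  have IH: "matpow M m $1$1 = \<alpha> + \<beta> * M$1$1" "matpow M m $1$2 = \<beta> * M$1$2"
    "matpow M m $2$1 = \<beta> * M$2$1" "matpow M m $2$2 = \<alpha> + \<beta> * M$2$2" using Suc ab by simp_all
  have T: "T = M$1$1 + M$2$2" and D: "D = M$1$1 * M$2$2 - M$1$2 * M$2$1"
    unfolding T_def D_def trace2_def det_2 by simp_all
  show ?case unfolding matpow.simps mult2 IH using ab by (simp add: T D algebra_simps)
qed

lemma matpow_inv:
  fixes M :: "int^2^2"
  defines "T \<equiv> trace2 M" and "D \<equiv> det M"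
  shows "trace2 (matpow M m) = 2 * fst (abc T D m) + snd (abc T D m) * T"
    "det (matpow M m) = fst (abc T D m)^2 + fst (abc T D m) * snd (abc T D m) * T + (snd (abc T D m))^2 * D"
proof -
  obtain \<alpha> \<beta> where ab: "abc T D m = (\<alpha>, \<beta>)" by (cases "abc T D m")
  have F: "matpow M m $1$1 = \<alpha> + \<beta> * M$1$1" "matpow M m $1$2 = \<beta> * M$1$2"
    "matpow M m $2$1 = \<beta> * M$2$1" "matpow M m $2$2 = \<alpha> + \<beta> * M$2$2"
    using matpow_form[of M m] ab unfolding T_def D_def by simp_all
  have T: "T = M$1$1 + M$2$2" and D: "D = M$1$1 * M$2$2 - M$1$2 * M$2$1"
    unfolding T_def D_def trace2_def det_2 by simp_all
  show "trace2 (matpow M m) = 2 * fst (abc T D m) + snd (abc T D m) * T"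
    by (unfold trace2_def F ab fst_conv snd_conv, unfold T, simp add: algebra_simps)
  show "det (matpow M m) = fst (abc T D m)^2 + fst (abc T D m) * snd (abc T D m) * T + (snd (abc T D m))^2 * D"
    by (unfold det_2 F ab fst_conv snd_conv, unfold T D, simp add: algebra_simps power2_eq_square)
qed

lemma fixed_proj_iff:
  "tact A (tproj y) = tproj y \<longleftrightarrow>
     (of_int (A$1$1 - 1) * fst y + of_int (A$1$2) * snd y \<in> \<int> \<and>
      of_int (A$2$1) * fst y + of_int (A$2$2 - 1) * snd y \<in> \<int>)"
proof -
  have e1: "fst (lin A y) - fst y = of_int (A$1$1 - 1) * fst y + of_int (A$1$2) * snd y"
    by (simp add: lin_def algebra_simps)
  have e2: "snd (lin A y) - snd y = of_int (A$2$1) * fst y + of_int (A$2$2 - 1) * snd y"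
    by (simp add: lin_def algebra_simps)
  have "tact A (tproj y) = tproj (lin A y)" by (simp add: tact_lin lin_tproj)
  then have "tact A (tproj y) = tproj y \<longleftrightarrow> frac (fst (lin A y)) = frac (fst y) \<and> frac (snd (lin A y)) = frac (snd y)"
    by (simp add: tproj_def)
  also have "\<dots> \<longleftrightarrow> fst (lin A y) - fst y \<in> \<int> \<and> snd (lin A y) - snd y \<in> \<int>"
    using frac_eq_imp_int frac_int_diff by blast
  finally show ?thesis unfolding e1 e2 .
qed

lemma fixed_iff:
  "x \<in> torus \<Longrightarrow> tact A x = x \<longleftrightarrow>
     (of_int (A$1$1 - 1) * fst x + of_int (A$1$2) * snd x \<in> \<int> \<and>
      of_int (A$2$1) * fst x + of_int (A$2$2 - 1) * snd x \<in> \<int>)"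
  using fixed_proj_iff[of A x] tproj_torus[of x] by simp

lemma solve_int:
  fixes p q r s :: int and u w :: real
  assumes "of_int p * u + of_int q * w \<in> \<int>" "of_int r * u + of_int s * w \<in> \<int>"
  shows "of_int (p * s - q * r) * u \<in> \<int>" "of_int (p * s - q * r) * w \<in> \<int>"
proof -
  have "of_int (p * s - q * r) * u = of_int s * (of_int p * u + of_int q * w) - of_int q * (of_int r * u + of_int s * w)"
    by (simp add: algebra_simps)
  then show "of_int (p * s - q * r) * u \<in> \<int>" using assms by simp
  have "of_int (p * s - q * r) * w = of_int p * (of_int r * u + of_int s * w) - of_int r * (of_int p * u + of_int q * w)"
    by (simp add: algebra_simps)
  then show "of_int (p * s - q * r) * w \<in> \<int>" using assms by simp
qed

lemma int_small: "(z::real) \<in> \<int> \<Longrightarrow> \<bar>z\<bar> < 1 \<Longrightarrow> z = 0"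
  by (metis Ints_cases of_int_0 of_int_abs of_int_less_1_iff abs_less_iff zabs_less_one_iff of_int_eq_0_iff)

lemma kernel_vec:
  fixes p q r s :: int
  assumes "p * s - q * r = 0"
  shows "\<exists>u1 u2::real. (u1 \<noteq> 0 \<or> u2 \<noteq> 0) \<and> of_int p * u1 + of_int q * u2 = 0 \<and> of_int r * u1 + of_int s * u2 = 0"
proof -
  have ps: "real_of_int p * of_int s = of_int q * of_int r"
    using assms by (metis eq_iff_diff_eq_0 of_int_mult)
  show ?thesis
  proof (cases "p \<noteq> 0 \<or> q \<noteq> 0")
    case True
    then show ?thesis
      by (intro exI[of _ "of_int q"] exI[of _ "- of_int p"]) (use ps in \<open>auto simp: algebra_simps\<close>)
  next
    case pq: False
    show ?thesis
    proof (cases "r \<noteq> 0 \<or> s \<noteq> 0")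
      case True
      then show ?thesis using pq
        by (intro exI[of _ "of_int s"] exI[of _ "- of_int r"]) (auto simp: algebra_simps)
    next
      case False
      then show ?thesis using pq by (intro exI[of _ 1] exI[of _ 0]) auto
    qed
  qed
qed

lemma global_zero:
  fixes A :: "int^2^2"
  assumes d: "(A$1$1 - 1) * (A$2$2 - 1) - A$1$2 * A$2$1 = 0"
  shows "isolated_fixed_points A = {}"
proof (rule ccontr)
  assume "isolated_fixed_points A \<noteq> {}"
  then obtain x where x: "x \<in> torus" "tact A x = x"
    and iso: "\<exists>e>0. \<forall>y. 0 < dist y x \<and> dist y x < e \<longrightarrow> tact A (tproj y) \<noteq> tproj y"
    unfolding isolated_fixed_points_def by blast
  obtain e where e: "e > 0" "\<forall>y. 0 < dist y x \<and> dist y x < e \<longrightarrow> tact A (tproj y) \<noteq> tproj y"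
    using iso by blast
  obtain u1 u2 :: real where u: "u1 \<noteq> 0 \<or> u2 \<noteq> 0"
    "of_int (A$1$1 - 1) * u1 + of_int (A$1$2) * u2 = 0" "of_int (A$2$1) * u1 + of_int (A$2$2 - 1) * u2 = 0"
    using kernel_vec[OF d] by blast
  define S where "S = \<bar>u1\<bar> + \<bar>u2\<bar>"
  have S0: "S > 0" using u(1) unfolding S_def by auto
  define t where "t = e / (2 * S)"
  have t0: "t > 0" using S0 e(1) unfolding t_def by simp
  define y where "y = (fst x + t * u1, snd x + t * u2)"
  have fx: "of_int (A$1$1 - 1) * fst x + of_int (A$1$2) * snd x \<in> \<int>"
    "of_int (A$2$1) * fst x + of_int (A$2$2 - 1) * snd x \<in> \<int>"
    using x fixed_iff[of x A] by simp_all
  have "of_int (A$1$1 - 1) * fst y + of_int (A$1$2) * snd y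
      = (of_int (A$1$1 - 1) * fst x + of_int (A$1$2) * snd x) + t * (of_int (A$1$1 - 1) * u1 + of_int (A$1$2) * u2)"
    unfolding y_def by (simp add: algebra_simps)
  then have fy1: "of_int (A$1$1 - 1) * fst y + of_int (A$1$2) * snd y \<in> \<int>" using fx(1) u(2) by simp
  have "of_int (A$2$1) * fst y + of_int (A$2$2 - 1) * snd y
      = (of_int (A$2$1) * fst x + of_int (A$2$2 - 1) * snd x) + t * (of_int (A$2$1) * u1 + of_int (A$2$2 - 1) * u2)"
    unfolding y_def by (simp add: algebra_simps)
  then have fy2: "of_int (A$2$1) * fst y + of_int (A$2$2 - 1) * snd y \<in> \<int>" using fx(2) u(3) by simp
  have fixy: "tact A (tproj y) = tproj y" using fixed_proj_iff fy1 fy2 by blast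
  have "dist y x = dist (fst x + t * u1, snd x + t * u2) (fst x, snd x)" unfolding y_def by simp
  also have "\<dots> = sqrt ((t * u1)^2 + (t * u2)^2)" by (simp only: dist_Pair_Pair dist_real_def) simp
  also have "\<dots> \<le> \<bar>t * u1\<bar> + \<bar>t * u2\<bar>" by (rule sqrt_sum_squares_le_sum_abs)
  also have "\<dots> = t * S" using t0 unfolding S_def by (simp add: abs_mult algebra_simps)
  also have "\<dots> = e / 2" using S0 unfolding t_def by simp
  finally have "dist y x < e" using e(1) by simp
  moreover have "y \<noteq> x"
  proof
    assume "y = x"
    then have "t * u1 = 0" "t * u2 = 0" unfolding y_def by (auto simp: prod_eq_iff)
    then show False using t0 u(1) by simp
  qed
  then have "0 < dist y x" by simp
  ultimately show False using e(2) fixy by blast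
qed

lemma global_nonzero:
  fixes A :: "int^2^2"
  defines "\<delta> \<equiv> (A$1$1 - 1) * (A$2$2 - 1) - A$1$2 * A$2$1"
  assumes d: "\<delta> \<noteq> 0"
  shows "isolated_fixed_points A = {x \<in> lattice (nat \<bar>\<delta>\<bar>). tact A x = x}"
proof -
  define N where "N = nat \<bar>\<delta>\<bar>"
  have N1: "N \<ge> 1" using d unfolding N_def by simp
  have rN: "real N = \<bar>real_of_int \<delta>\<bar>" unfolding N_def by simp
  have absint: "real N * z \<in> \<int>" if "of_int \<delta> * z \<in> \<int>" for z
  proof (cases "\<delta> \<ge> 0")
    case True then show ?thesis using that rN by simp
  next
    case False
    then have "real N * z = - (of_int \<delta> * z)" using rN by simp
    then show ?thesis using that by simp
  qed
  show ?thesis unfolding N_def[symmetric]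
  proof
    show "isolated_fixed_points A \<subseteq> {x \<in> lattice N. tact A x = x}"
    proof
      fix x assume "x \<in> isolated_fixed_points A"
      then have x: "x \<in> torus" "tact A x = x" unfolding isolated_fixed_points_def by blast+
      have fx: "of_int (A$1$1 - 1) * fst x + of_int (A$1$2) * snd x \<in> \<int>"
        "of_int (A$2$1) * fst x + of_int (A$2$2 - 1) * snd x \<in> \<int>"
        using x fixed_iff[of x A] by simp_all
      have "of_int \<delta> * fst x \<in> \<int>" "of_int \<delta> * snd x \<in> \<int>"
        using solve_int[OF fx] unfolding \<delta>_def by simp_all
      then have "real N * fst x \<in> \<int>" "real N * snd x \<in> \<int>" using absint by blast+
      then have "x \<in> lattice N" using lattice_iff[OF N1] x(1) by blast
      then show "x \<in> {x \<in> lattice N. tact A x = x}" using x(2) by blast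
    qed
  next
    show "{x \<in> lattice N. tact A x = x} \<subseteq> isolated_fixed_points A"
    proof
      fix x assume "x \<in> {x \<in> lattice N. tact A x = x}"
      then have x: "x \<in> torus" "tact A x = x" using lattice_torus[OF N1] by blast+
      have fx: "of_int (A$1$1 - 1) * fst x + of_int (A$1$2) * snd x \<in> \<int>"
        "of_int (A$2$1) * fst x + of_int (A$2$2 - 1) * snd x \<in> \<int>"
        using x fixed_iff[of x A] by simp_all
      have dpos: "\<bar>real_of_int \<delta>\<bar> > 0" using d by simp
      have "\<forall>y. 0 < dist y x \<and> dist y x < 1 / \<bar>real_of_int \<delta>\<bar> \<longrightarrow> tact A (tproj y) \<noteq> tproj y"
      proof (intro allI impI notI)
        fix y assume dy: "0 < dist y x \<and> dist y x < 1 / \<bar>real_of_int \<delta>\<bar>" and fy: "tact A (tproj y) = tproj y"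
        have fy': "of_int (A$1$1 - 1) * fst y + of_int (A$1$2) * snd y \<in> \<int>"
          "of_int (A$2$1) * fst y + of_int (A$2$2 - 1) * snd y \<in> \<int>"
          using fy fixed_proj_iff[of A y] by simp_all
        define u where "u = fst y - fst x"
        define w where "w = snd y - snd x"
        have "of_int (A$1$1 - 1) * u + of_int (A$1$2) * w =
          (of_int (A$1$1 - 1) * fst y + of_int (A$1$2) * snd y) - (of_int (A$1$1 - 1) * fst x + of_int (A$1$2) * snd x)"
          unfolding u_def w_def by (simp add: algebra_simps)
        then have i1: "of_int (A$1$1 - 1) * u + of_int (A$1$2) * w \<in> \<int>" using fy'(1) fx(1) by simp
        have "of_int (A$2$1) * u + of_int (A$2$2 - 1) * w =
          (of_int (A$2$1) * fst y + of_int (A$2$2 - 1) * snd y) - (of_int (A$2$1) * fst x + of_int (A$2$2 - 1) * snd x)"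
          unfolding u_def w_def by (simp add: algebra_simps)
        then have i2: "of_int (A$2$1) * u + of_int (A$2$2 - 1) * w \<in> \<int>" using fy'(2) fx(2) by simp
        have du: "of_int \<delta> * u \<in> \<int>" "of_int \<delta> * w \<in> \<int>"
          using solve_int[OF i1 i2] unfolding \<delta>_def by simp_all
        have "\<bar>u\<bar> \<le> dist y x" unfolding u_def using dist_fst_le[of y x] by (simp add: dist_real_def)
        then have "\<bar>u\<bar> * \<bar>real_of_int \<delta>\<bar> \<le> dist y x * \<bar>real_of_int \<delta>\<bar>" by (rule mult_right_mono) simp
        moreover have "dist y x * \<bar>real_of_int \<delta>\<bar> < 1" using dy dpos by (simp add: less_divide_eq)
        ultimately have "\<bar>u\<bar> * \<bar>real_of_int \<delta>\<bar> < 1" by linarith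
        then have "\<bar>of_int \<delta> * u\<bar> < 1" by (simp add: abs_mult mult.commute)
        then have "of_int \<delta> * u = 0" using int_small du(1) by blast
        then have u0: "u = 0" using d by simp
        have "\<bar>w\<bar> \<le> dist y x" unfolding w_def using dist_snd_le[of y x] by (simp add: dist_real_def)
        then have "\<bar>w\<bar> * \<bar>real_of_int \<delta>\<bar> \<le> dist y x * \<bar>real_of_int \<delta>\<bar>" by (rule mult_right_mono) simp
        moreover have "dist y x * \<bar>real_of_int \<delta>\<bar> < 1" using dy dpos by (simp add: less_divide_eq)
        ultimately have "\<bar>w\<bar> * \<bar>real_of_int \<delta>\<bar> < 1" by linarith
        then have "\<bar>of_int \<delta> * w\<bar> < 1" by (simp add: abs_mult mult.commute)
        then have "of_int \<delta> * w = 0" using int_small du(2) by blast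
        then have w0: "w = 0" using d by simp
        have "y = x" using u0 w0 unfolding u_def w_def by (simp add: prod_eq_iff)
        then show False using dy by simp
      qed
      moreover have "1 / \<bar>real_of_int \<delta>\<bar> > 0" using dpos by simp
      ultimately show "x \<in> isolated_fixed_points A" unfolding isolated_fixed_points_def using x by blast
    qed
  qed
qed

lemma global_char:
  fixes A :: "int^2^2"
  defines "\<delta> \<equiv> det A - trace2 A + 1"
  shows "global_fix_count A = (if \<delta> = 0 then 0 else local_fix_count A (nat \<bar>\<delta>\<bar>))"
proof -
  have e: "\<delta> = (A$1$1 - 1) * (A$2$2 - 1) - A$1$2 * A$2$1"
    unfolding \<delta>_def det_2 trace2_def by (simp add: algebra_simps)
  show ?thesis
  proof (cases "\<delta> = 0")
    case True
    then show ?thesis using global_zero[of A] e by (simp add: global_fix_count_def)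
  next
    case False
    then show ?thesis using global_nonzero[of A] e
      by (simp add: global_fix_count_def local_fix_count_def)
  qed
qed

theorem corollary42:
  fixes M N :: "int^2^2"
  assumes "det M = det N" and "trace2 M = trace2 N" and "mgcd M = mgcd N"
  shows "(\<forall>n::nat. n \<ge> 1 \<longrightarrow> same_local_statistics M N n)
       \<and> (\<forall>n::nat. \<forall>m::nat. n \<ge> 1 \<longrightarrow>
             local_fix_count (matpow M m) n = local_fix_count (matpow N m) n)
       \<and> (\<forall>m::nat. global_fix_count (matpow M m) = global_fix_count (matpow N m))"
proof (intro conjI allI impI)
  fix n :: nat assume "n \<ge> 1"
  then show "same_local_statistics M N n" using local_part[OF assms] by blast
next
  fix n m :: nat assume "n \<ge> 1"
  then show "local_fix_count (matpow M m) n = local_fix_count (matpow N m) n"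
    using local_part[OF assms] by blast
next
  fix m :: nat
  have t: "trace2 (matpow M m) = trace2 (matpow N m)"
    using matpow_inv(1)[of M m] matpow_inv(1)[of N m] assms(1,2) by simp
  have d: "det (matpow M m) = det (matpow N m)"
    using matpow_inv(2)[of M m] matpow_inv(2)[of N m] assms(1,2) by simp
  define \<delta> where "\<delta> = det (matpow M m) - trace2 (matpow M m) + 1"
  have \<delta>N: "\<delta> = det (matpow N m) - trace2 (matpow N m) + 1" using t d \<delta>_def by simp
  show "global_fix_count (matpow M m) = global_fix_count (matpow N m)"
  proof (cases "\<delta> = 0")
    case True
    then show ?thesis using global_char[of "matpow M m"] global_char[of "matpow N m"] \<delta>_def \<delta>N by simp
  next
    case False
    then have "nat \<bar>\<delta>\<bar> \<ge> 1" by simp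
    then have "local_fix_count (matpow M m) (nat \<bar>\<delta>\<bar>) = local_fix_count (matpow N m) (nat \<bar>\<delta>\<bar>)"
      using local_part[OF assms] by blast
    then show ?thesis using global_char[of "matpow M m"] global_char[of "matpow N m"] \<delta>_def \<delta>N False
      by simp
  qed
qed

end
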